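(* Let $p < q$ be primes and $n = pq$. Then the line graph $L(\Gamma(\mathbb{Z}_n))$ is very cost effective.
   Context: $\mathbb{Z}_n$ is the ring of residue classes modulo $n$. The zero-divisor graph $\Gamma(\mathbb{Z}_n)$ has as vertices the nonzero zero-divisors of $\mathbb{Z}_n$, two distinct vertices being adjacent iff their product is $0$. The line graph $L(G)$ of a simple graph $G$ has the edges of $G$ as vertices, two being adjacent iff the corresponding edges share an endpoint. For a graph $G=(V,E)$ and $S\subseteq V$, a vertex $v\in S$ is very cost effective if $|N(v)\cap S| < |N(v)\cap (V\setminus S)|$; $S$ is very cost effective if every vertex of $S$ is. A bipartition $\{S, V\setminus S\}$ is very cost effective if both parts are very cost effective, and $G$ is very cost effective if it has a very cost effective bipartition. *)

theory Defs
  imports Main "HOL-Computational_Algebra.Primes"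
begin

text \<open>A simple graph is given by a vertex set V and a symmetric irreflexive
  adjacency relation E (only its restriction to V matters).\<close>

definition nbhd :: "'a set \<Rightarrow> ('a \<Rightarrow> 'a \<Rightarrow> bool) \<Rightarrow> 'a \<Rightarrow> 'a set" where
  "nbhd V E v = {u \<in> V. E v u}"

definition very_cost_effective_vertex ::
  "'a set \<Rightarrow> ('a \<Rightarrow> 'a \<Rightarrow> bool) \<Rightarrow> 'a set \<Rightarrow> 'a \<Rightarrow> bool" where
  "very_cost_effective_vertex V E S v \<longleftrightarrow>
     card (nbhd V E v \<inter> S) < card (nbhd V E v \<inter> (V - S))"

definition very_cost_effective_set ::
  "'a set \<Rightarrow> ('a \<Rightarrow> 'a \<Rightarrow> bool) \<Rightarrow> 'a set \<Rightarrow> bool" where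
  "very_cost_effective_set V E S \<longleftrightarrow> (\<forall>v\<in>S. very_cost_effective_vertex V E S v)"

definition very_cost_effective_bipartition ::
  "'a set \<Rightarrow> ('a \<Rightarrow> 'a \<Rightarrow> bool) \<Rightarrow> 'a set \<Rightarrow> bool" where
  "very_cost_effective_bipartition V E S \<longleftrightarrow>
     S \<subseteq> V \<and> very_cost_effective_set V E S \<and> very_cost_effective_set V E (V - S)"

definition very_cost_effective_graph ::
  "'a set \<Rightarrow> ('a \<Rightarrow> 'a \<Rightarrow> bool) \<Rightarrow> bool" where
  "very_cost_effective_graph V E \<longleftrightarrow> (\<exists>S. very_cost_effective_bipartition V E S)"

text \<open>Zero-divisor graph of Z_n; residue classes represented by 0..n-1.\<close>

definition zd_vertices :: "nat \<Rightarrow> nat set" where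
  "zd_vertices n = {x \<in> {1..<n}. \<exists>y \<in> {1..<n}. (x * y) mod n = 0}"

definition zd_adj :: "nat \<Rightarrow> nat \<Rightarrow> nat \<Rightarrow> bool" where
  "zd_adj n x y \<longleftrightarrow> x \<noteq> y \<and> (x * y) mod n = 0"

text \<open>Line graph: vertices are edges of G, represented as 2-element sets.\<close>

definition line_vertices :: "'a set \<Rightarrow> ('a \<Rightarrow> 'a \<Rightarrow> bool) \<Rightarrow> 'a set set" where
  "line_vertices V E = {{u, v} | u v. u \<in> V \<and> v \<in> V \<and> u \<noteq> v \<and> E u v}"

definition line_adj :: "'a set \<Rightarrow> 'a set \<Rightarrow> bool" where
  "line_adj e f \<longleftrightarrow> e \<noteq> f \<and> e \<inter> f \<noteq> {}"

end

theory Submission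
  imports Defs
begin


definition cnt :: "nat \<Rightarrow> nat \<Rightarrow> nat" where
  "cnt c m = (m - 1 + (if odd c then 1 else 0)) div 2"

lemma cnt_card: "card {j\<in>{1..<m}. even (c+j)} = cnt c m"
proof (induction m)
  case 0 then show ?case by (simp add: cnt_def)
next
  case (Suc n)
  show ?case
  proof (cases "n = 0")
    case True then show ?thesis by (simp add: cnt_def)
  next
    case False
    have e: "{j\<in>{1..<Suc n}. even (c+j)} = {j\<in>{1..<n}. even (c+j)} \<union> (if even (c+n) then {n} else {})"
      using False by (cases "even (c+n)") (auto simp: less_Suc_eq)
    show ?thesis
    proof (cases "even (c+n)")
      case True
      then have "card {j\<in>{1..<Suc n}. even (c+j)} = Suc (card {j\<in>{1..<n}. even (c+j)})"
        unfolding e by simp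
      moreover have "cnt c (Suc n) = Suc (cnt c n)" using True False unfolding cnt_def
        by (cases "odd c") ((simp only: if_P if_not_P), presburger)+
      ultimately show ?thesis using Suc by simp
    next
      case F: False
      then have "card {j\<in>{1..<Suc n}. even (c+j)} = card {j\<in>{1..<n}. even (c+j)}"
        unfolding e by simp
      moreover have "cnt c (Suc n) = cnt c n" using F False unfolding cnt_def
        by (cases "odd c") ((simp only: if_P if_not_P), presburger)+
      ultimately show ?thesis using Suc by simp
    qed
  qed
qed

lemma cnt_card_ne: "card {j'\<in>{1..<m}. j' \<noteq> j \<and> even (c+j')} =
   cnt c m - (if even (c+j) \<and> j \<in> {1..<m} then 1 else 0)"
proof (cases "even (c+j) \<and> j \<in> {1..<m}")
  case True
  have "{j'\<in>{1..<m}. j' \<noteq> j \<and> even (c+j')} = {j\<in>{1..<m}. even (c+j)} - {j}" by auto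
  then show ?thesis using True cnt_card[of m c] by simp
next
  case False
  have "{j'\<in>{1..<m}. j' \<noteq> j \<and> even (c+j')} = {j\<in>{1..<m}. even (c+j)}" using False by auto
  then have "card {j'\<in>{1..<m}. j' \<noteq> j \<and> even (c+j')} = cnt c m" using cnt_card[of m c] by simp
  then show ?thesis using False by (subst if_not_P) auto
qed

definition R :: "nat \<times> nat \<Rightarrow> nat \<times> nat \<Rightarrow> bool" where
  "R u w \<longleftrightarrow> u \<noteq> w \<and> (fst u = fst w \<or> snd u = snd w)"

lemma grid_card:
  assumes "k \<in> {1..<p}" "j \<in> {1..<q}"
  shows "card {w \<in> {1..<p}\<times>{1..<q}. R (k,j) w \<and> P w} =
     card {j'\<in>{1..<q}. j' \<noteq> j \<and> P (k,j')} + card {k'\<in>{1..<p}. k' \<noteq> k \<and> P (k',j)}"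
proof -
  have e: "{w \<in> {1..<p}\<times>{1..<q}. R (k,j) w \<and> P w} =
     Pair k ` {j'\<in>{1..<q}. j' \<noteq> j \<and> P (k,j')} \<union> (\<lambda>k'. (k',j)) ` {k'\<in>{1..<p}. k' \<noteq> k \<and> P (k',j)}"
    using assms unfolding R_def by auto
  have d: "Pair k ` {j'\<in>{1..<q}. j' \<noteq> j \<and> P (k,j')} \<inter> (\<lambda>k'. (k',j)) ` {k'\<in>{1..<p}. k' \<noteq> k \<and> P (k',j)} = {}"
    by auto
  show ?thesis unfolding e
    by (subst card_Un_disjoint[OF _ _ d]) (auto simp: card_image inj_on_def)
qed

lemma cnt_odd: "odd q \<Longrightarrow> cnt c q = (q - 1) div 2"
  unfolding cnt_def by (cases "odd c") ((simp only: if_P if_not_P), presburger)+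

lemma cnt_pair: "p \<ge> 1 \<Longrightarrow> cnt j p + cnt (Suc j) p = p - 1 \<and> cnt j p \<le> cnt (Suc j) p + 1 \<and> cnt (Suc j) p \<le> cnt j p + 1"
proof -
  have a: "cnt j p = (p-1 + (if odd j then 1 else 0)) div 2" "cnt (Suc j) p = (p-1 + (if odd j then 0 else 1)) div 2"
    by (simp_all add: cnt_def)
  show ?thesis unfolding a by (cases "odd j") ((simp only: if_P if_not_P), presburger)+
qed

lemma ar: "(1::nat) \<le> Q \<Longrightarrow> a \<le> Suc b \<Longrightarrow> Q + (a - Suc 0) - Suc 0 < Q + b"
  by linarith

lemma grid_main:
  assumes "odd q" "k \<in> {1..<p}" "j \<in> {1..<q}"
  shows "even (k+j) \<Longrightarrow> card {w \<in> {1..<p}\<times>{1..<q}. R (k,j) w \<and> even (fst w + snd w)}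
        < card {w \<in> {1..<p}\<times>{1..<q}. R (k,j) w \<and> \<not> even (fst w + snd w)}"
    and "odd (k+j) \<Longrightarrow> card {w \<in> {1..<p}\<times>{1..<q}. R (k,j) w \<and> \<not> even (fst w + snd w)}
        < card {w \<in> {1..<p}\<times>{1..<q}. R (k,j) w \<and> even (fst w + snd w)}"
proof -
  have s1: "\<And>x. even (fst (k,x) + snd (k,x)) = even (k + x)" by simp
  have s2: "\<And>x. even (fst (x,j) + snd (x,j)) = even (j + x)" by (simp add: add.commute)
  note G = grid_card[OF assms(2,3)]
  have ee: "{j'\<in>{1..<q}. j' \<noteq> j \<and> \<not> even (k + j')} = {j'\<in>{1..<q}. j' \<noteq> j \<and> even (Suc k + j')}"
       "{k'\<in>{1..<p}. k' \<noteq> k \<and> \<not> even (j + k')} = {k'\<in>{1..<p}. k' \<noteq> k \<and> even (Suc j + k')}" by auto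
  have p1: "p \<ge> 1" using assms by auto
  have q1: "q \<ge> 1" using assms by auto
  have "q \<ge> 3" using assms by (cases "q = 2") auto
  then have q3: "(q - 1) div 2 \<ge> 1" using div_le_mono[of 2 "q-1" 2] by simp
  note A = q3 cnt_odd[OF assms(1), of k] cnt_odd[OF assms(1), of "Suc k"] cnt_pair[OF p1, of j]
  show "even (k+j) \<Longrightarrow> card {w \<in> {1..<p}\<times>{1..<q}. R (k,j) w \<and> even (fst w + snd w)}
        < card {w \<in> {1..<p}\<times>{1..<q}. R (k,j) w \<and> \<not> even (fst w + snd w)}"
    unfolding G s1 s2 ee cnt_card_ne using assms A
    by (simp add: add.commute[of j k]) ((simp split: if_splits)?; rule ar; simp)
  show "odd (k+j) \<Longrightarrow> card {w \<in> {1..<p}\<times>{1..<q}. R (k,j) w \<and> \<not> even (fst w + snd w)}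
        < card {w \<in> {1..<p}\<times>{1..<q}. R (k,j) w \<and> even (fst w + snd w)}"
    unfolding G s1 s2 ee cnt_card_ne using assms A
    by (simp add: add.commute[of j k]) ((simp split: if_splits)?; rule ar; simp)
qed


lemma ndvd:
  assumes "prime (p::nat)" "prime q" "p < q" shows "\<not> p dvd q" "\<not> q dvd p"
  using assms by (metis prime_nat_iff less_not_refl prime_gt_1_nat) (metis assms dvd_imp_le prime_gt_0_nat not_le)

lemma cross:
  assumes "prime (p::nat)" "prime q" "p < q" "k \<in> {1..<p}"
  shows "k * q \<noteq> j * p"
proof
  assume "k * q = j * p"
  then have "p dvd k * q" by simp
  then have "p dvd k" using ndvd[OF assms(1-3)] prime_dvd_mult_iff[OF assms(1)] by blast
  then show False using assms(4) dvd_imp_le by fastforce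
qed

lemma zdv:
  assumes "prime (p::nat)" "prime q" "p < q"
  shows "zd_vertices (p*q) = (\<lambda>k. k*q) ` {1..<p} \<union> (\<lambda>j. j*p) ` {1..<q}"
proof -
  have cop: "coprime p q" using assms primes_coprime by (metis less_not_refl)
  have p0: "p > 1" "q > 1" using assms prime_gt_1_nat by auto
  show ?thesis
  proof (rule set_eqI, rule iffI)
    fix x assume "x \<in> zd_vertices (p*q)"
    then obtain y where x: "1 \<le> x" "x < p*q" and y: "1 \<le> y" "y < p*q" and d: "p*q dvd x*y"
      unfolding zd_vertices_def by (auto simp: mod_eq_0_iff_dvd)
    have px: "p dvd x \<or> p dvd y" using d assms(1) prime_dvd_mult_iff dvd_mult_left by blast
    have qx: "q dvd x \<or> q dvd y" using d assms(2) prime_dvd_mult_iff dvd_mult_right by blast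
    have nx: "\<not> (p dvd x \<and> q dvd x)"
    proof
      assume "p dvd x \<and> q dvd x"
      then have "p*q dvd x" using divides_mult cop by blast
      then show False using x dvd_imp_le by fastforce
    qed
    have ny: "\<not> (p dvd y \<and> q dvd y)"
    proof
      assume "p dvd y \<and> q dvd y"
      then have "p*q dvd y" using divides_mult cop by blast
      then show False using y dvd_imp_le by fastforce
    qed
    show "x \<in> (\<lambda>k. k*q) ` {1..<p} \<union> (\<lambda>j. j*p) ` {1..<q}"
    proof (cases "p dvd x")
      case True
      then obtain j where j: "x = j * p" by (metis dvdE mult.commute)
      then have "j \<in> {1..<q}" using x p0 by (auto simp: mult.commute)
      then show ?thesis using j by auto
    next
      case False
      then have "q dvd x" using px qx ny by blast
      then obtain k where k: "x = k * q" by (metis dvdE mult.commute)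
      then have "k \<in> {1..<p}" using x p0 by (auto simp: mult.commute)
      then show ?thesis using k by auto
    qed
  next
    fix x assume "x \<in> (\<lambda>k. k*q) ` {1..<p} \<union> (\<lambda>j. j*p) ` {1..<q}"
    then show "x \<in> zd_vertices (p*q)"
    proof
      assume "x \<in> (\<lambda>k. k*q) ` {1..<p}"
      then obtain k where k: "k \<in> {1..<p}" "x = k*q" by auto
      have "p \<in> {1..<p*q}" using p0 by simp
      moreover have "x \<in> {1..<p*q}" using k p0 by (simp add: mult.commute)
      moreover have "x * p mod (p*q) = 0" using k by simp
      ultimately show ?thesis unfolding zd_vertices_def mem_Collect_eq by (metis (no_types, lifting))
    next
      assume "x \<in> (\<lambda>j. j*p) ` {1..<q}"
      then obtain j where k: "j \<in> {1..<q}" "x = j*p" by auto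
      have "q \<in> {1..<p*q}" using p0 by simp
      moreover have "x \<in> {1..<p*q}" using k p0 by simp
      moreover have "x * q mod (p*q) = 0" using k by simp
      ultimately show ?thesis unfolding zd_vertices_def mem_Collect_eq by (metis (no_types, lifting))
    qed
  qed
qed


definition gg :: "nat \<Rightarrow> nat \<Rightarrow> nat \<times> nat \<Rightarrow> nat set" where
  "gg p q u = {fst u * q, snd u * p}"

lemma adjAA:
  assumes "prime (p::nat)" "prime q" "p < q" "k \<in> {1..<p}" "k' \<in> {1..<p}"
  shows "\<not> zd_adj (p*q) (k*q) (k'*q)"
proof
  assume "zd_adj (p*q) (k*q) (k'*q)"
  then have "(k*q*(k'*q)) mod (p * q) = 0" unfolding zd_adj_def by blast
  then have "p * q dvd k*q*(k'*q)" by (rule mod_0_imp_dvd)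
  then have "p dvd k*q*(k'*q)" using dvd_mult_left by blast
  then have "p dvd k \<or> p dvd q \<or> p dvd k'" using prime_dvd_mult_iff[OF assms(1)] by auto
  then show False using ndvd[OF assms(1-3)] assms(4,5) dvd_imp_le by fastforce
qed

lemma adjBB:
  assumes "prime (p::nat)" "prime q" "p < q" "j \<in> {1..<q}" "j' \<in> {1..<q}"
  shows "\<not> zd_adj (p*q) (j*p) (j'*p)"
proof
  assume "zd_adj (p*q) (j*p) (j'*p)"
  then have "(j*p*(j'*p)) mod (p * q) = 0" unfolding zd_adj_def by blast
  then have "p * q dvd j*p*(j'*p)" by (rule mod_0_imp_dvd)
  then have "q dvd j*p*(j'*p)" using dvd_mult_right by blast
  then have "q dvd j \<or> q dvd p \<or> q dvd j'" using prime_dvd_mult_iff[OF assms(2)] by auto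
  then show False using ndvd[OF assms(1-3)] assms(4,5) dvd_imp_le by fastforce
qed

lemma adjAB:
  assumes "prime (p::nat)" "prime q" "p < q" "k \<in> {1..<p}" "j \<in> {1..<q}"
  shows "zd_adj (p*q) (k*q) (j*p)" "zd_adj (p*q) (j*p) (k*q)"
proof -
  have ne: "k*q \<noteq> j*p" using cross[OF assms(1-4)] .
  have "k*q*(j*p) = (k*j)*(p*q)" by simp
  then have "(k*q*(j*p)) mod (p*q) = 0" by simp
  then show "zd_adj (p*q) (k*q) (j*p)" "zd_adj (p*q) (j*p) (k*q)"
    unfolding zd_adj_def using ne by (auto simp: mult.commute)
qed

lemma lv:
  assumes "prime (p::nat)" "prime q" "p < q"
  shows "line_vertices (zd_vertices (p*q)) (zd_adj (p*q)) = gg p q ` ({1..<p}\<times>{1..<q})"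
proof (rule set_eqI, rule iffI)
  fix e assume "e \<in> line_vertices (zd_vertices (p*q)) (zd_adj (p*q))"
  then obtain u v where uv: "e = {u,v}" "u \<in> zd_vertices (p*q)" "v \<in> zd_vertices (p*q)" "zd_adj (p*q) u v"
    unfolding line_vertices_def by auto
  note Z = zdv[OF assms]
  show "e \<in> gg p q ` ({1..<p}\<times>{1..<q})"
  proof -
    have "u \<in> (\<lambda>k. k*q) ` {1..<p} \<union> (\<lambda>j. j*p) ` {1..<q}" using uv(2) Z by simp
    then obtain a where a: "(a \<in> {1..<p} \<and> u = a*q) \<or> (a \<in> {1..<q} \<and> u = a*p)" by blast
    have "v \<in> (\<lambda>k. k*q) ` {1..<p} \<union> (\<lambda>j. j*p) ` {1..<q}" using uv(3) Z by simp
    then obtain b where b: "(b \<in> {1..<p} \<and> v = b*q) \<or> (b \<in> {1..<q} \<and> v = b*p)" by blast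
    show ?thesis
    proof (cases "a \<in> {1..<p} \<and> u = a*q")
      case True
      then have "\<not> (b \<in> {1..<p} \<and> v = b*q)" using adjAA[OF assms, of a b] uv(4) by auto
      then have "b \<in> {1..<q} \<and> v = b*p" using b by auto
      then have "e = gg p q (a,b)" using True uv(1) unfolding gg_def by auto
      then show ?thesis using True \<open>b \<in> {1..<q} \<and> v = b*p\<close> by auto
    next
      case False
      then have A: "a \<in> {1..<q} \<and> u = a*p" using a by auto
      then have "\<not> (b \<in> {1..<q} \<and> v = b*p)" using adjBB[OF assms, of a b] uv(4) by auto
      then have B: "b \<in> {1..<p} \<and> v = b*q" using b by auto
      then have "e = gg p q (b,a)" using A uv(1) unfolding gg_def by auto
      then show ?thesis using A B by auto
    qed
  qed
next
  fix e assume "e \<in> gg p q ` ({1..<p}\<times>{1..<q})"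
  then obtain k j where kj: "k \<in> {1..<p}" "j \<in> {1..<q}" "e = {k*q, j*p}" unfolding gg_def by auto
  have "k*q \<in> zd_vertices (p*q)" "j*p \<in> zd_vertices (p*q)" using zdv[OF assms] kj by auto
  moreover have "k*q \<noteq> j*p" using cross[OF assms kj(1)] .
  moreover note adjAB[OF assms kj(1,2)]
  ultimately show "e \<in> line_vertices (zd_vertices (p*q)) (zd_adj (p*q))"
    unfolding line_vertices_def using kj(3) by blast
qed

lemma gg_inj:
  assumes "prime (p::nat)" "prime q" "p < q"
  shows "inj_on (gg p q) ({1..<p}\<times>{1..<q})"
proof (rule inj_onI)
  fix u w assume u: "u \<in> {1..<p}\<times>{1..<q}" and w: "w \<in> {1..<p}\<times>{1..<q}" and e: "gg p q u = gg p q w"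
  have q0: "q > 0" "p > 0" using assms prime_gt_0_nat by auto
  have c1: "fst u * q \<noteq> snd w * p" using cross[OF assms] u by auto
  have c2: "fst w * q \<noteq> snd u * p" using cross[OF assms] w by auto
  have "fst u * q \<in> gg p q u" unfolding gg_def by simp
  then have "fst u * q \<in> gg p q w" using e by simp
  then have "fst u * q = fst w * q" using c1 unfolding gg_def by blast
  moreover have "snd u * p \<in> gg p q u" unfolding gg_def by simp
  then have "snd u * p \<in> gg p q w" using e by simp
  then have "snd u * p = snd w * p" using c2 unfolding gg_def by auto
  ultimately show "u = w" using q0 by (simp add: prod_eq_iff)
qed

lemma gg_adj:
  assumes "prime (p::nat)" "prime q" "p < q" "u \<in> {1..<p}\<times>{1..<q}" "w \<in> {1..<p}\<times>{1..<q}"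
  shows "line_adj (gg p q u) (gg p q w) \<longleftrightarrow> R u w"
proof -
  have q0: "q > 0" "p > 0" using assms prime_gt_0_nat by auto
  have c1: "fst u * q \<noteq> snd w * p" using cross[OF assms(1-3)] assms(4) by auto
  have c2: "fst w * q \<noteq> snd u * p" using cross[OF assms(1-3)] assms(5) by auto
  have i: "gg p q u \<noteq> gg p q w \<longleftrightarrow> u \<noteq> w" using gg_inj[OF assms(1-3)] assms(4,5)
    by (auto dest: inj_onD)
  have "gg p q u \<inter> gg p q w \<noteq> {} \<longleftrightarrow> fst u * q = fst w * q \<or> snd u * p = snd w * p"
    using c1 c2 unfolding gg_def by auto
  also have "\<dots> \<longleftrightarrow> fst u = fst w \<or> snd u = snd w" using q0 by simp
  finally show ?thesis unfolding line_adj_def R_def using i by blast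
qed

lemma nb:
  assumes "prime (p::nat)" "prime q" "p < q" "u \<in> {1..<p}\<times>{1..<q}" "T \<subseteq> {1..<p}\<times>{1..<q}"
  shows "card (nbhd (gg p q ` ({1..<p}\<times>{1..<q})) line_adj (gg p q u) \<inter> gg p q ` T)
     = card {w \<in> {1..<p}\<times>{1..<q}. R u w \<and> w \<in> T}"
proof -
  have "nbhd (gg p q ` ({1..<p}\<times>{1..<q})) line_adj (gg p q u) \<inter> gg p q ` T
      = gg p q ` {w \<in> {1..<p}\<times>{1..<q}. R u w \<and> w \<in> T}"
    unfolding nbhd_def using gg_adj[OF assms(1-4)] assms(5) by auto
  moreover have "inj_on (gg p q) {w \<in> {1..<p}\<times>{1..<q}. R u w \<and> w \<in> T}"
    using gg_inj[OF assms(1-3)] by (rule inj_on_subset) auto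
  ultimately show ?thesis by (simp add: card_image)
qed

theorem mainTheorem4:
  fixes p q :: nat
  assumes "prime p" and "prime q" and "p < q"
  shows "very_cost_effective_graph
           (line_vertices (zd_vertices (p * q)) (zd_adj (p * q))) line_adj"
proof -
  define G where "G = {1..<p}\<times>{1..<q}"
  define S0 where "S0 = {w \<in> G. even (fst w + snd w)}"
  define V where "V = gg p q ` G"
  have V: "line_vertices (zd_vertices (p * q)) (zd_adj (p * q)) = V"
    unfolding V_def G_def using lv[OF assms] .
  have oq: "odd q"
  proof -
    have "q \<noteq> 2" using assms prime_gt_1_nat[of p] by auto
    then have "q > 2" using prime_ge_2_nat[OF assms(2)] by linarith
    then show ?thesis using assms(2) prime_odd_nat by blast
  qed
  have inj: "inj_on (gg p q) G" unfolding G_def using gg_inj[OF assms] .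
  have VS: "V - gg p q ` S0 = gg p q ` (G - S0)"
    unfolding V_def S0_def using inj by (subst inj_on_image_set_diff[OF inj]) auto
  have e1: "\<And>u. {w \<in> G. R u w \<and> w \<in> S0} = {w \<in> G. R u w \<and> even (fst w + snd w)}"
    unfolding S0_def by auto
  have e2: "\<And>u. {w \<in> G. R u w \<and> w \<in> G - S0} = {w \<in> G. R u w \<and> \<not> even (fst w + snd w)}"
    unfolding S0_def by auto
  have sub1: "S0 \<subseteq> G" "G - S0 \<subseteq> G" unfolding S0_def by auto
  have "very_cost_effective_bipartition V line_adj (gg p q ` S0)"
    unfolding very_cost_effective_bipartition_def very_cost_effective_set_def
      very_cost_effective_vertex_def
  proof (intro conjI ballI)
    show "gg p q ` S0 \<subseteq> V" unfolding V_def S0_def by auto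
  next
    fix v assume "v \<in> gg p q ` S0"
    then obtain u where u: "u \<in> S0" "v = gg p q u" by auto
    obtain k j where kj: "u = (k,j)" by fastforce
    have uG: "u \<in> G" "even (k+j)" using u kj unfolding S0_def by auto
    show "card (nbhd V line_adj v \<inter> gg p q ` S0) < card (nbhd V line_adj v \<inter> (V - gg p q ` S0))"
      unfolding VS unfolding V_def u(2)
      using nb[OF assms uG(1)[unfolded G_def] sub1(1)[unfolded G_def]]
        nb[OF assms uG(1)[unfolded G_def] sub1(2)[unfolded G_def]]
        e1[of u, unfolded G_def] e2[of u, unfolded G_def]
        grid_main(1)[OF oq, of k p j] uG kj unfolding G_def by auto
  next
    fix v assume "v \<in> V - gg p q ` S0"
    then have "v \<in> gg p q ` (G - S0)" using VS by simp
    then obtain u where u: "u \<in> G - S0" "v = gg p q u" by auto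
    obtain k j where kj: "u = (k,j)" by fastforce
    have uG: "u \<in> G" "odd (k+j)" using u kj unfolding S0_def by auto
    have VVS: "V - (V - gg p q ` S0) = gg p q ` S0" unfolding V_def S0_def by auto
    show "card (nbhd V line_adj v \<inter> (V - gg p q ` S0)) < card (nbhd V line_adj v \<inter> (V - (V - gg p q ` S0)))"
      unfolding VVS unfolding VS unfolding V_def u(2)
      using nb[OF assms uG(1)[unfolded G_def] sub1(1)[unfolded G_def]]
        nb[OF assms uG(1)[unfolded G_def] sub1(2)[unfolded G_def]]
        e1[of u, unfolded G_def] e2[of u, unfolded G_def]
        grid_main(2)[OF oq, of k p j] uG kj unfolding G_def by auto
  qed
  then show ?thesis unfolding very_cost_effective_graph_def V by blast
qed

end
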